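(* Let $N\ge 1$ be an integer, $\delta>0$, $\mu>0$, let $\underline{x}\le\overline{x}$ and $x_0$ be real numbers, and let $\underline{u},\overline{u}\in\mathbb{R}^N$ (indexed $k=0,\dots,N-1$). Define real numbers $\max\mathcal{F}_k,\min\mathcal{F}_k$ for $k=0,\dots,N$ by $\max\mathcal{F}_0=\min\mathcal{F}_0=x_0$ and, for $k=0,\dots,N-1$, $$\max\mathcal{F}_{k+1}=\min\{\overline{x},\ \max\mathcal{F}_k-\delta\underline{u}_k\},\qquad \min\mathcal{F}_{k+1}=\max\{\underline{x},\ \min\mathcal{F}_k-\delta\overline{u}_k\},$$ and let $\mathcal{F}_k=[\min\mathcal{F}_k,\max\mathcal{F}_k]$. Assume the problem is feasible in the sense that $\underline{u}_k\le\overline{u}_k$ for all $k=0,\dots,N-1$ and $\max\mathcal{F}_k\ge\min\mathcal{F}_k$ for all $k=1,\dots,N$. Define $\max\mathcal{G}_N=\max\mathcal{F}_N$, $\min\mathcal{G}_N=\min\mathcal{F}_N$, $x^{(0)}_N=\tfrac12(\max\mathcal{G}_N+\min\mathcal{G}_N)$, and for $k=N-1,\dots,0$: $$\max\mathcal{G}_k=\min\{\max\mathcal{G}_{k+1}+\delta\overline{u}_k,\ \max\mathcal{F}_k\},\qquad \min\mathcal{G}_k=\max\{\min\mathcal{G}_{k+1}+\delta\underline{u}_k,\ \min\mathcal{F}_k\},$$ $$x^{(0)}_k=\tfrac12(\max\mathcal{G}_k+\min\mathcal{G}_k),\qquad u^{(0)}_k=\tfrac1\delta\big(x^{(0)}_k-x^{(0)}_{k+1}\big).$$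 Let $\Phi\in\mathbb{R}^N$ be the vector of all ones, let $\Psi\in\mathbb{R}^{N\times N}$ be the lower triangular matrix with $\Psi_{ij}=\delta$ for $j\le i$ and $\Psi_{ij}=0$ for $j>i$, and set $$A=\begin{bmatrix}\Psi\\-\Psi\end{bmatrix}\in\mathbb{R}^{2N\times N},\qquad b=\begin{bmatrix}\Phi(x_0-\overline{x})\\-\Phi(x_0-\underline{x})\end{bmatrix}\in\mathbb{R}^{2N}.$$ Let $u^{(0)}=(u^{(0)}_0,\dots,u^{(0)}_{N-1})$, $s^{(0)}=Au^{(0)}-b$, $S^{(0)}=\mathrm{diag}(s^{(0)})$, and $\theta_1^{(0)}=\frac1\mu (S^{(0)})^{-1}\mathbf{1}$ (when defined). Then $(u^{(0)},s^{(0)},\theta_1^{(0)})$ satisfy all of the conditions $$S^{(0)}\theta_1^{(0)}=\tfrac1\mu\mathbf{1},\quad Au^{(0)}-b-s^{(0)}=0,\quad u^{(0)}-\underline{u}\ge0,\quad \overline{u}-u^{(0)}\ge0,\quad s^{(0)}>0,\quad \theta_1^{(0)}\ge0$$ if and only if $\max\mathcal{F}_k>\underline{x}$ and $\min\mathcal{F}_k<\overline{x}$ for all $k\in\{1,\dots,N\}$.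
   Context: This concerns initialization of an interior point method for the problem $\min_u F(u)$ subject to $x=\Phi x_0-\Psi u$, $\underline{x}\le x_k\le\overline{x}$ for $k=1,\dots,N$, and $\underline{u}\le u\le\overline{u}$, rewritten with slack variable $s\in\mathbb{R}^{2N}$ as $Au-b-s=0$, $s\ge0$; note $Au-b=(\overline{x}\Phi-x,\ x-\underline{x}\Phi)$. The intervals $\mathcal{F}_k$ are the sets of reachable feasible states at step $k$, the sets $\mathcal{G}_k$ form a backward-refined tube, and $\mathcal{X}=[\underline{x},\overline{x}]$. Vector inequalities are componentwise and $\mathbf{1}$ is the all-ones vector of length $2N$. *)

theory Defs
  imports Main "HOL.Real"
begin

text \<open>Vectors in R^N are functions nat => real, only indices below N matter.
  Parameters: xlo, xhi (state bounds), x0 (initial state), d (delta),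
  ulo, uhi (input bounds).\<close>

fun maxF :: "real \<Rightarrow> real \<Rightarrow> real \<Rightarrow> (nat \<Rightarrow> real) \<Rightarrow> nat \<Rightarrow> real" where
  "maxF xhi x0 d ulo 0 = x0"
| "maxF xhi x0 d ulo (Suc k) = min xhi (maxF xhi x0 d ulo k - d * ulo k)"

fun minF :: "real \<Rightarrow> real \<Rightarrow> real \<Rightarrow> (nat \<Rightarrow> real) \<Rightarrow> nat \<Rightarrow> real" where
  "minF xlo x0 d uhi 0 = x0"
| "minF xlo x0 d uhi (Suc k) = max xlo (minF xlo x0 d uhi k - d * uhi k)"

text \<open>Backward recursion for the tube G: maxGb j is the value of max G at step N - j.\<close>
fun maxGb :: "nat \<Rightarrow> real \<Rightarrow> real \<Rightarrow> real \<Rightarrow> (nat \<Rightarrow> real) \<Rightarrow> (nat \<Rightarrow> real) \<Rightarrow> nat \<Rightarrow> real" where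
  "maxGb N xhi x0 d ulo uhi 0 = maxF xhi x0 d ulo N"
| "maxGb N xhi x0 d ulo uhi (Suc j) =
     min (maxGb N xhi x0 d ulo uhi j + d * uhi (N - Suc j)) (maxF xhi x0 d ulo (N - Suc j))"

fun minGb :: "nat \<Rightarrow> real \<Rightarrow> real \<Rightarrow> real \<Rightarrow> (nat \<Rightarrow> real) \<Rightarrow> (nat \<Rightarrow> real) \<Rightarrow> nat \<Rightarrow> real" where
  "minGb N xlo x0 d ulo uhi 0 = minF xlo x0 d uhi N"
| "minGb N xlo x0 d ulo uhi (Suc j) =
     max (minGb N xlo x0 d ulo uhi j + d * ulo (N - Suc j)) (minF xlo x0 d uhi (N - Suc j))"

definition maxG :: "nat \<Rightarrow> real \<Rightarrow> real \<Rightarrow> real \<Rightarrow> (nat \<Rightarrow> real) \<Rightarrow> (nat \<Rightarrow> real) \<Rightarrow> nat \<Rightarrow> real" where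
  "maxG N xhi x0 d ulo uhi k = maxGb N xhi x0 d ulo uhi (N - k)"

definition minG :: "nat \<Rightarrow> real \<Rightarrow> real \<Rightarrow> real \<Rightarrow> (nat \<Rightarrow> real) \<Rightarrow> (nat \<Rightarrow> real) \<Rightarrow> nat \<Rightarrow> real" where
  "minG N xlo x0 d ulo uhi k = minGb N xlo x0 d ulo uhi (N - k)"

definition xinit :: "nat \<Rightarrow> real \<Rightarrow> real \<Rightarrow> real \<Rightarrow> real \<Rightarrow> (nat \<Rightarrow> real) \<Rightarrow> (nat \<Rightarrow> real) \<Rightarrow> nat \<Rightarrow> real" where
  "xinit N xlo xhi x0 d ulo uhi k =
     (maxG N xhi x0 d ulo uhi k + minG N xlo x0 d ulo uhi k) / 2"

definition uinit :: "nat \<Rightarrow> real \<Rightarrow> real \<Rightarrow> real \<Rightarrow> real \<Rightarrow> (nat \<Rightarrow> real) \<Rightarrow> (nat \<Rightarrow> real) \<Rightarrow> nat \<Rightarrow> real" where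
  "uinit N xlo xhi x0 d ulo uhi k =
     (1 / d) * (xinit N xlo xhi x0 d ulo uhi k - xinit N xlo xhi x0 d ulo uhi (Suc k))"

definition Psi :: "real \<Rightarrow> nat \<Rightarrow> nat \<Rightarrow> real" where
  "Psi d i j = (if j \<le> i then d else 0)"

definition Amat :: "nat \<Rightarrow> real \<Rightarrow> nat \<Rightarrow> nat \<Rightarrow> real" where
  "Amat N d i j = (if i < N then Psi d i j else - Psi d (i - N) j)"

definition bvec :: "nat \<Rightarrow> real \<Rightarrow> real \<Rightarrow> real \<Rightarrow> nat \<Rightarrow> real" where
  "bvec N xlo xhi x0 i = (if i < N then x0 - xhi else - (x0 - xlo))"

definition Amul :: "nat \<Rightarrow> real \<Rightarrow> (nat \<Rightarrow> real) \<Rightarrow> nat \<Rightarrow> real" where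
  "Amul N d u i = (\<Sum>j<N. Amat N d i j * u j)"

definition sinit :: "nat \<Rightarrow> real \<Rightarrow> real \<Rightarrow> real \<Rightarrow> real \<Rightarrow> (nat \<Rightarrow> real) \<Rightarrow> (nat \<Rightarrow> real) \<Rightarrow> nat \<Rightarrow> real" where
  "sinit N xlo xhi x0 d ulo uhi i =
     Amul N d (uinit N xlo xhi x0 d ulo uhi) i - bvec N xlo xhi x0 i"

text \<open>Where s i = 0 (S singular) this convention gives 0, so the condition S theta = (1/mu) 1
  fails, exactly as when theta is undefined.\<close>
definition thetainit :: "nat \<Rightarrow> real \<Rightarrow> real \<Rightarrow> real \<Rightarrow> real \<Rightarrow> real \<Rightarrow> (nat \<Rightarrow> real) \<Rightarrow> (nat \<Rightarrow> real) \<Rightarrow> nat \<Rightarrow> real" where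
  "thetainit N mu xlo xhi x0 d ulo uhi i = (1 / mu) * inverse (sinit N xlo xhi x0 d ulo uhi i)"

end

theory Submission
  imports Defs
begin

declare maxF.simps(2)[simp del] minF.simps(2)[simp del]

locale P1 =
  fixes N :: nat and d xlo xhi x0 :: real and ulo uhi :: "nat \<Rightarrow> real"
  assumes N1: "N \<ge> 1" and dpos: "d > 0" and xle: "xlo \<le> xhi"
    and ule: "\<forall>k<N. ulo k \<le> uhi k"
    and feas: "\<forall>k\<in>{1..N}. maxF xhi x0 d ulo k \<ge> minF xlo x0 d uhi k"
begin

abbreviation "mF k \<equiv> maxF xhi x0 d ulo k"
abbreviation "nF k \<equiv> minF xlo x0 d uhi k"
abbreviation "mG k \<equiv> maxG N xhi x0 d ulo uhi k"
abbreviation "nG k \<equiv> minG N xlo x0 d ulo uhi k"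
abbreviation "xi k \<equiv> xinit N xlo xhi x0 d ulo uhi k"

lemma mG_N: "mG N = mF N" by (simp add: maxG_def)
lemma nG_N: "nG N = nF N" by (simp add: minG_def)

lemma mG_step: assumes "k < N" shows "mG k = min (mG (Suc k) + d * uhi k) (mF k)"
proof -
  have e: "N - k = Suc (N - Suc k)" using assms by simp
  have e2: "N - Suc (N - Suc k) = k" using assms by simp
  show ?thesis unfolding maxG_def e by (simp only: maxGb.simps e2)
qed

lemma nG_step: assumes "k < N" shows "nG k = max (nG (Suc k) + d * ulo k) (nF k)"
proof -
  have e: "N - k = Suc (N - Suc k)" using assms by simp
  have e2: "N - Suc (N - Suc k) = k" using assms by simp
  show ?thesis unfolding minG_def e by (simp only: minGb.simps e2)
qed

lemma F_le: "k \<le> N \<Longrightarrow> nF k \<le> mF k"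
  using feas by (cases k) auto

lemma mF_Suc: "mF (Suc k) \<le> mF k - d * ulo k" by (simp add: maxF.simps)
lemma nF_Suc: "nF (Suc k) \<ge> nF k - d * uhi k" by (simp add: minF.simps)
lemma mF_hi: "k \<ge> 1 \<Longrightarrow> mF k \<le> xhi" by (cases k) (auto simp: maxF.simps)
lemma nF_lo: "k \<ge> 1 \<Longrightarrow> nF k \<ge> xlo" by (cases k) (auto simp: minF.simps)

lemma inv: "k \<le> N \<Longrightarrow> nF k \<le> mG k \<and> mG k \<le> mF k \<and> nF k \<le> nG k \<and> nG k \<le> mF k \<and> nG k \<le> mG k"
proof (induction k rule: inc_induct)
  case base
  then show ?case using F_le[of N] by (simp add: mG_N nG_N)
next
  case (step n)
  have a: "nF n \<le> mF n" using F_le step by simp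
  have b: "mF (Suc n) \<le> mF n - d * ulo n" "nF (Suc n) \<ge> nF n - d * uhi n" using mF_Suc nF_Suc by simp_all
  have c: "ulo n \<le> uhi n" using ule step by simp
  have dd: "d * ulo n \<le> d * uhi n" using c dpos by simp
  show ?case unfolding mG_step[OF step(2)] nG_step[OF step(2)]
    using a b dd step(3) by (simp add: min_def max_def)
qed

lemma x0eq: "xi 0 = x0"
proof -
  have "nF 0 \<le> mG 0 \<and> mG 0 \<le> mF 0 \<and> nF 0 \<le> nG 0 \<and> nG 0 \<le> mF 0 \<and> nG 0 \<le> mG 0"
    using inv[of 0] by simp
  then have "mG 0 = x0" "nG 0 = x0" by (auto simp: maxF.simps minF.simps)
  then show ?thesis by (simp add: xinit_def)
qed

lemma xstep: assumes "k < N"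
  shows "xi (Suc k) + d * ulo k \<le> xi k \<and> xi k \<le> xi (Suc k) + d * uhi k"
proof -
  have i1: "nF k \<le> mG k \<and> mG k \<le> mF k \<and> nF k \<le> nG k \<and> nG k \<le> mF k \<and> nG k \<le> mG k"
    using inv assms by simp
  have i2: "nF (Suc k) \<le> mG (Suc k) \<and> mG (Suc k) \<le> mF (Suc k) \<and> nF (Suc k) \<le> nG (Suc k) \<and> nG (Suc k) \<le> mF (Suc k) \<and> nG (Suc k) \<le> mG (Suc k)"
    using inv assms by simp
  have b: "mF (Suc k) \<le> mF k - d * ulo k" "nF (Suc k) \<ge> nF k - d * uhi k" using mF_Suc nF_Suc by simp_all
  have c: "ulo k \<le> uhi k" using ule assms by simp
  have dd: "d * ulo k \<le> d * uhi k" using c dpos by simp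
  have m1: "mG k \<le> mG (Suc k) + d * uhi k" "mG k \<ge> mG (Suc k) + d * ulo k"
    unfolding mG_step[OF assms] using b dd i2 by (auto simp: min_def)
  have m2: "nG k \<le> nG (Suc k) + d * uhi k" "nG k \<ge> nG (Suc k) + d * ulo k"
    unfolding nG_step[OF assms] using b dd i2 by (auto simp: max_def)
  show ?thesis unfolding xinit_def using m1 m2 by (intro conjI) (simp_all add: field_simps)
qed

lemma ulo_ok: "k < N \<Longrightarrow> uinit N xlo xhi x0 d ulo uhi k - ulo k \<ge> 0"
  using xstep[of k] dpos by (simp add: uinit_def field_simps)

lemma uhi_ok: "k < N \<Longrightarrow> uhi k - uinit N xlo xhi x0 d ulo uhi k \<ge> 0"
  using xstep[of k] dpos by (simp add: uinit_def field_simps)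

lemma psum: assumes "i < N"
  shows "(\<Sum>j<N. Psi d i j * uinit N xlo xhi x0 d ulo uhi j) = xi 0 - xi (Suc i)"
proof -
  have "(\<Sum>j<N. Psi d i j * uinit N xlo xhi x0 d ulo uhi j)
      = (\<Sum>j<N. if j \<le> i then d * uinit N xlo xhi x0 d ulo uhi j else 0)"
    by (rule sum.cong) (auto simp: Psi_def)
  also have "\<dots> = (\<Sum>j\<in>{j\<in>{..<N}. j \<le> i}. d * uinit N xlo xhi x0 d ulo uhi j)"
    by (rule sum.inter_filter[symmetric]) simp
  also have "{j\<in>{..<N}. j \<le> i} = {..i}" using assms by auto
  also have "(\<Sum>j\<in>{..i}. d * uinit N xlo xhi x0 d ulo uhi j) = (\<Sum>j\<in>{..i}. xi j - xi (Suc j))"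
    using dpos by (intro sum.cong) (auto simp: uinit_def)
  also have "\<dots> = xi 0 - xi (Suc i)" by (rule sum_telescope)
  finally show ?thesis .
qed

lemma s_lo: "i < N \<Longrightarrow> sinit N xlo xhi x0 d ulo uhi i = xhi - xi (Suc i)"
  using psum[of i] x0eq by (simp add: sinit_def Amul_def Amat_def bvec_def)

lemma s_hi: "i < N \<Longrightarrow> sinit N xlo xhi x0 d ulo uhi (N + i) = xi (Suc i) - xlo"
proof -
  assume a: "i < N"
  have "(\<Sum>j<N. Amat N d (N + i) j * uinit N xlo xhi x0 d ulo uhi j)
     = - (\<Sum>j<N. Psi d i j * uinit N xlo xhi x0 d ulo uhi j)"
    by (simp add: Amat_def sum_negf)
  then show ?thesis using psum[OF a] x0eq by (simp add: sinit_def Amul_def bvec_def)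
qed

lemma s_pos_iff: "(\<forall>i<2*N. sinit N xlo xhi x0 d ulo uhi i > 0) \<longleftrightarrow>
   (\<forall>k\<in>{1..N}. xlo < xi k \<and> xi k < xhi)"
proof
  assume h: "\<forall>i<2*N. sinit N xlo xhi x0 d ulo uhi i > 0"
  show "\<forall>k\<in>{1..N}. xlo < xi k \<and> xi k < xhi"
  proof
    fix k assume k: "k \<in> {1..N}"
    then obtain i where i: "k = Suc i" "i < N" by (cases k) auto
    have "sinit N xlo xhi x0 d ulo uhi i > 0" "sinit N xlo xhi x0 d ulo uhi (N + i) > 0"
      using h i by auto
    then show "xlo < xi k \<and> xi k < xhi" using s_lo s_hi i by auto
  qed
next
  assume h: "\<forall>k\<in>{1..N}. xlo < xi k \<and> xi k < xhi"
  show "\<forall>i<2*N. sinit N xlo xhi x0 d ulo uhi i > 0"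
  proof (intro allI impI)
    fix i assume i: "i < 2*N"
    show "sinit N xlo xhi x0 d ulo uhi i > 0"
    proof (cases "i < N")
      case True
      then show ?thesis using s_lo h by force
    next
      case False
      then have "i = N + (i - N)" "i - N < N" using i by auto
      then show ?thesis using s_hi[of "i - N"] h by force
    qed
  qed
qed

lemma lemC:
  assumes H: "\<forall>k\<in>{1..N}. mF k > xlo \<and> nF k < xhi"
  shows "j \<le> N \<Longrightarrow> 1 \<le> j \<Longrightarrow> nG j = mF j \<Longrightarrow> nF j = mF j"
proof (induction j rule: inc_induct)
  case base
  then show ?case using nG_N by simp
next
  case (step n)
  note step = step.prems(1) step.hyps(2) step.IH step.prems(2)
  have a: "nF n \<le> mF n" using F_le step by simp
  show ?case
  proof (cases "nF n = mF n")
    case True then show ?thesis .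
  next
    case False
    have e: "nG (Suc n) + d * ulo n = mF n"
      using step(4) False a unfolding nG_step[OF step(2)] by (auto simp: max_def split: if_splits)
    have i2: "nG (Suc n) \<le> mF (Suc n)" using inv[of "Suc n"] step by simp
    have "mF (Suc n) \<le> mF n - d * ulo n" by (rule mF_Suc)
    then have e2: "nG (Suc n) = mF (Suc n)" "mF (Suc n) = mF n - d * ulo n" using e i2 by auto
    have IH: "nF (Suc n) = mF (Suc n)" using step(3) e2 by simp
    have "mF (Suc n) > xlo" using H step by auto
    then have "nF n - d * uhi n = mF n - d * ulo n" using IH e2 by (auto simp: minF.simps max_def split: if_splits)
    moreover have "d * ulo n \<le> d * uhi n" using ule step dpos by simp
    ultimately show ?thesis using a by simp
  qed
qed

lemma lemD:
  assumes H: "\<forall>k\<in>{1..N}. mF k > xlo \<and> nF k < xhi"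
  shows "j \<le> N \<Longrightarrow> 1 \<le> j \<Longrightarrow> mG j = nF j \<Longrightarrow> nF j = mF j"
proof (induction j rule: inc_induct)
  case base
  then show ?case using mG_N by simp
next
  case (step n)
  note step = step.prems(1) step.hyps(2) step.IH step.prems(2)
  have a: "nF n \<le> mF n" using F_le step by simp
  show ?case
  proof (cases "nF n = mF n")
    case True then show ?thesis .
  next
    case False
    have e: "mG (Suc n) + d * uhi n = nF n"
      using step(4) False a unfolding mG_step[OF step(2)] by (auto simp: min_def split: if_splits)
    have i2: "nF (Suc n) \<le> mG (Suc n)" using inv[of "Suc n"] step by simp
    have "nF (Suc n) \<ge> nF n - d * uhi n" by (rule nF_Suc)
    then have e2: "mG (Suc n) = nF (Suc n)" "nF (Suc n) = nF n - d * uhi n" using e i2 by auto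
    have IH: "nF (Suc n) = mF (Suc n)" using step(3) e2 by simp
    have "nF (Suc n) < xhi" using H step by auto
    then have "nF n - d * uhi n = mF n - d * ulo n" using IH e2 by (auto simp: maxF.simps min_def split: if_splits)
    moreover have "d * ulo n \<le> d * uhi n" using ule step dpos by simp
    ultimately show ?thesis using a by simp
  qed
qed

lemma x_iff: "(\<forall>k\<in>{1..N}. xlo < xi k \<and> xi k < xhi) \<longleftrightarrow>
   (\<forall>k\<in>{1..N}. mF k > xlo \<and> nF k < xhi)"
proof
  assume h: "\<forall>k\<in>{1..N}. xlo < xi k \<and> xi k < xhi"
  show "\<forall>k\<in>{1..N}. mF k > xlo \<and> nF k < xhi"
  proof
    fix k assume k: "k \<in> {1..N}"
    have "nF k \<le> mG k \<and> mG k \<le> mF k \<and> nF k \<le> nG k \<and> nG k \<le> mF k \<and> nG k \<le> mG k"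
      using inv k by simp
    moreover have "xlo < xi k \<and> xi k < xhi" using h k by blast
    ultimately show "mF k > xlo \<and> nF k < xhi" by (auto simp: xinit_def)
  qed
next
  assume H: "\<forall>k\<in>{1..N}. mF k > xlo \<and> nF k < xhi"
  show "\<forall>k\<in>{1..N}. xlo < xi k \<and> xi k < xhi"
  proof
    fix k assume k: "k \<in> {1..N}"
    have i: "nF k \<le> mG k \<and> mG k \<le> mF k \<and> nF k \<le> nG k \<and> nG k \<le> mF k \<and> nG k \<le> mG k"
      using inv k by simp
    have hi: "mF k \<le> xhi" "nF k \<ge> xlo" using k mF_hi nF_lo by auto
    have "nG k < xhi"
    proof (rule ccontr)
      assume "\<not> nG k < xhi"
      then have "nG k = mF k" "mF k = xhi" using i hi by auto
      then have "nF k = xhi" using lemC[OF H, of k] k by auto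
      then show False using H k by auto
    qed
    moreover have "mG k > xlo"
    proof (rule ccontr)
      assume "\<not> mG k > xlo"
      then have "mG k = nF k" "nF k = xlo" using i hi by auto
      then have "mF k = xlo" using lemD[OF H, of k] k by auto
      then show False using H k by auto
    qed
    ultimately show "xlo < xi k \<and> xi k < xhi" using i hi by (auto simp: xinit_def)
  qed
qed

end

theorem proposition1:
  fixes N :: nat and d mu xlo xhi x0 :: real and ulo uhi :: "nat \<Rightarrow> real"
  assumes "N \<ge> 1" and "d > 0" and "mu > 0" and "xlo \<le> xhi"
    and "\<forall>k<N. ulo k \<le> uhi k"
    and "\<forall>k\<in>{1..N}. maxF xhi x0 d ulo k \<ge> minF xlo x0 d uhi k"
  shows "((\<forall>i<2*N. sinit N xlo xhi x0 d ulo uhi i * thetainit N mu xlo xhi x0 d ulo uhi i = 1 / mu)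
         \<and> (\<forall>i<2*N. Amul N d (uinit N xlo xhi x0 d ulo uhi) i - bvec N xlo xhi x0 i
                      - sinit N xlo xhi x0 d ulo uhi i = 0)
         \<and> (\<forall>k<N. uinit N xlo xhi x0 d ulo uhi k - ulo k \<ge> 0)
         \<and> (\<forall>k<N. uhi k - uinit N xlo xhi x0 d ulo uhi k \<ge> 0)
         \<and> (\<forall>i<2*N. sinit N xlo xhi x0 d ulo uhi i > 0)
         \<and> (\<forall>i<2*N. thetainit N mu xlo xhi x0 d ulo uhi i \<ge> 0))
     \<longleftrightarrow> (\<forall>k\<in>{1..N}. maxF xhi x0 d ulo k > xlo \<and> minF xlo x0 d uhi k < xhi)"
proof -
  interpret P1 N d xlo xhi x0 ulo uhi
    using assms by unfold_locales auto
  have L: "(\<forall>i<2*N. sinit N xlo xhi x0 d ulo uhi i * thetainit N mu xlo xhi x0 d ulo uhi i = 1 / mu)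
         \<and> (\<forall>i<2*N. Amul N d (uinit N xlo xhi x0 d ulo uhi) i - bvec N xlo xhi x0 i
                      - sinit N xlo xhi x0 d ulo uhi i = 0)
         \<and> (\<forall>k<N. uinit N xlo xhi x0 d ulo uhi k - ulo k \<ge> 0)
         \<and> (\<forall>k<N. uhi k - uinit N xlo xhi x0 d ulo uhi k \<ge> 0)
         \<and> (\<forall>i<2*N. sinit N xlo xhi x0 d ulo uhi i > 0)
         \<and> (\<forall>i<2*N. thetainit N mu xlo xhi x0 d ulo uhi i \<ge> 0)
      \<longleftrightarrow> (\<forall>i<2*N. sinit N xlo xhi x0 d ulo uhi i > 0)"
  proof
    assume h: "\<forall>i<2*N. sinit N xlo xhi x0 d ulo uhi i > 0"
    have t1: "\<forall>i<2*N. sinit N xlo xhi x0 d ulo uhi i * thetainit N mu xlo xhi x0 d ulo uhi i = 1 / mu"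
      using h by (auto simp: thetainit_def)
    have t2: "\<forall>i<2*N. thetainit N mu xlo xhi x0 d ulo uhi i \<ge> 0"
      using h assms(3) by (auto simp: thetainit_def)
    show "(\<forall>i<2*N. sinit N xlo xhi x0 d ulo uhi i * thetainit N mu xlo xhi x0 d ulo uhi i = 1 / mu)
         \<and> (\<forall>i<2*N. Amul N d (uinit N xlo xhi x0 d ulo uhi) i - bvec N xlo xhi x0 i
                      - sinit N xlo xhi x0 d ulo uhi i = 0)
         \<and> (\<forall>k<N. uinit N xlo xhi x0 d ulo uhi k - ulo k \<ge> 0)
         \<and> (\<forall>k<N. uhi k - uinit N xlo xhi x0 d ulo uhi k \<ge> 0)
         \<and> (\<forall>i<2*N. sinit N xlo xhi x0 d ulo uhi i > 0)
         \<and> (\<forall>i<2*N. thetainit N mu xlo xhi x0 d ulo uhi i \<ge> 0)"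
      using t1 t2 h ulo_ok uhi_ok by (simp add: sinit_def)
  qed simp
  show ?thesis using L s_pos_iff x_iff by blast
qed

end
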